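(* Let $\mathcal X$ be a countable set with the discrete topology. For every $P\in\Delta^*_{BD}$ and every path $\omega\in\Omega$, $\lim_{t\to\infty}P(\omega^t\mid\Omega)=0$.
   Context: $\Omega=\mathcal X^{\mathbb N}$ with the product topology; $\omega^t$ is the cylinder of paths agreeing with $\omega$ in the first $t$ coordinates ($\omega^0=\Omega$); $\mathcal H$ is the set of cylinders. $\Sigma$ is a $\sigma$-algebra containing all open sets; $\mathbb P$ the set of finitely additive probabilities on $(\Omega,\Sigma)$; $P\in\mathbb P$ is strongly nonatomic if for every $E\in\Sigma$, $\alpha\in[0,1]$ there is $F\in\Sigma$, $F\subseteq E$, with $P(F)=\alpha P(E)$. A conditional probability is a function $P:\Sigma\times\mathcal H\to[0,1]$ such that for every $t\ge0$, $\omega$: (1) $P(\cdot\mid\omega^t)\in\mathbb P$; (2) $P(\omega^t\mid\omega^t)=1$; (3) $P(E\cap\omega^{t+n}\mid\omega^t)=P(E\mid\omega^{t+n})P(\omega^{t+n}\mid\omega^t)$ for all $E$, $n\ge0$. It is a conditional opinion if $P(\cdot\mid\Omega)$ is strongly nonatomic. For conditional probabilities $P,Q$, $P$ merges with $Q$ if for every $\varepsilon>0$, $\lim_{t\to\infty}Q(\{\omega:\sup_{E\in\Sigma}|P(E\mid\omega^t)-Q(E\mid\omega^t)|>\varepsilon\}\mid\Omega)=0$. For $Q,R\in\mathbb P$, $Q\ll R$ means $R(E_n)\to0$ implies $Q(E_n)\to0$ for every sequence in $\Sigma$. A conditional probability $P$ has the Blackwell–Dubins property if for every $Q\in\mathbb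 P$ with $Q\ll P(\cdot\mid\Omega)$ there is a conditional probability $\widetilde Q$ with $\widetilde Q(\cdot\mid\Omega)=Q$ such that $P$ merges with $\widetilde Q$. $\Delta^*_{BD}$ is the set of conditional opinions with the Blackwell–Dubins property. *)

theory Defs
  imports "HOL-Analysis.Analysis"
begin

definition cyl :: "(nat \<Rightarrow> 'x) \<Rightarrow> nat \<Rightarrow> (nat \<Rightarrow> 'x) set" where
  "cyl \<omega> t = {\<omega>'. \<forall>i<t. \<omega>' i = \<omega> i}"

definition path_topology :: "(nat \<Rightarrow> 'x) topology" where
  "path_topology = product_topology (\<lambda>_. discrete_topology (UNIV :: 'x set)) UNIV"

definition admissible_sigma :: "(nat \<Rightarrow> 'x) set set \<Rightarrow> bool" where
  "admissible_sigma \<Sigma> \<longleftrightarrow> sigma_algebra UNIV \<Sigma> \<and> (\<forall>U. openin path_topology U \<longrightarrow> U \<in> \<Sigma>)"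

text \<open>Finitely additive probability on \<open>(\<Omega>,\<Sigma>)\<close> (values outside \<open>\<Sigma>\<close> are irrelevant).\<close>
definition fa_prob :: "'a set set \<Rightarrow> ('a set \<Rightarrow> real) \<Rightarrow> bool" where
  "fa_prob \<Sigma> P \<longleftrightarrow> (\<forall>E\<in>\<Sigma>. 0 \<le> P E \<and> P E \<le> 1) \<and> P UNIV = 1 \<and>
     (\<forall>A\<in>\<Sigma>. \<forall>B\<in>\<Sigma>. A \<inter> B = {} \<longrightarrow> P (A \<union> B) = P A + P B)"

definition strongly_nonatomic :: "'a set set \<Rightarrow> ('a set \<Rightarrow> real) \<Rightarrow> bool" where
  "strongly_nonatomic \<Sigma> P \<longleftrightarrow>
     (\<forall>E\<in>\<Sigma>. \<forall>\<alpha>::real. 0 \<le> \<alpha> \<and> \<alpha> \<le> 1 \<longrightarrow> (\<exists>F\<in>\<Sigma>. F \<subseteq> E \<and> P F = \<alpha> * P E))"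

text \<open>A conditional probability: \<open>P E H\<close> is \<open>P(E | H)\<close> for \<open>E \<in> \<Sigma>\<close> and cylinders \<open>H\<close>.\<close>
definition cond_prob :: "(nat \<Rightarrow> 'x) set set \<Rightarrow> ((nat \<Rightarrow> 'x) set \<Rightarrow> (nat \<Rightarrow> 'x) set \<Rightarrow> real) \<Rightarrow> bool" where
  "cond_prob \<Sigma> P \<longleftrightarrow> (\<forall>t \<omega>.
      fa_prob \<Sigma> (\<lambda>E. P E (cyl \<omega> t)) \<and>
      P (cyl \<omega> t) (cyl \<omega> t) = 1 \<and>
      (\<forall>E\<in>\<Sigma>. \<forall>n. P (E \<inter> cyl \<omega> (t + n)) (cyl \<omega> t)
                   = P E (cyl \<omega> (t + n)) * P (cyl \<omega> (t + n)) (cyl \<omega> t)))"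

definition cond_opinion :: "(nat \<Rightarrow> 'x) set set \<Rightarrow> ((nat \<Rightarrow> 'x) set \<Rightarrow> (nat \<Rightarrow> 'x) set \<Rightarrow> real) \<Rightarrow> bool" where
  "cond_opinion \<Sigma> P \<longleftrightarrow> cond_prob \<Sigma> P \<and> strongly_nonatomic \<Sigma> (\<lambda>E. P E UNIV)"

definition merges :: "(nat \<Rightarrow> 'x) set set \<Rightarrow> ((nat \<Rightarrow> 'x) set \<Rightarrow> (nat \<Rightarrow> 'x) set \<Rightarrow> real)
    \<Rightarrow> ((nat \<Rightarrow> 'x) set \<Rightarrow> (nat \<Rightarrow> 'x) set \<Rightarrow> real) \<Rightarrow> bool" where
  "merges \<Sigma> P Q \<longleftrightarrow> (\<forall>\<epsilon>>0.
     (\<lambda>t. Q {\<omega>. (SUP E\<in>\<Sigma>. \<bar>P E (cyl \<omega> t) - Q E (cyl \<omega> t)\<bar>) > \<epsilon>} UNIV) \<longlonglongrightarrow> 0)"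

definition abs_cont :: "'a set set \<Rightarrow> ('a set \<Rightarrow> real) \<Rightarrow> ('a set \<Rightarrow> real) \<Rightarrow> bool" where
  "abs_cont \<Sigma> Q R \<longleftrightarrow> (\<forall>En :: nat \<Rightarrow> 'a set. (\<forall>n. En n \<in> \<Sigma>) \<longrightarrow>
     (\<lambda>n. R (En n)) \<longlonglongrightarrow> 0 \<longrightarrow> (\<lambda>n. Q (En n)) \<longlonglongrightarrow> 0)"

definition blackwell_dubins :: "(nat \<Rightarrow> 'x) set set \<Rightarrow> ((nat \<Rightarrow> 'x) set \<Rightarrow> (nat \<Rightarrow> 'x) set \<Rightarrow> real) \<Rightarrow> bool" where
  "blackwell_dubins \<Sigma> P \<longleftrightarrow> (\<forall>Q. fa_prob \<Sigma> Q \<and> abs_cont \<Sigma> Q (\<lambda>E. P E UNIV) \<longrightarrow>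
     (\<exists>Qt. cond_prob \<Sigma> Qt \<and> (\<forall>E\<in>\<Sigma>. Qt E UNIV = Q E) \<and> merges \<Sigma> P Qt))"

definition Delta_BD :: "(nat \<Rightarrow> 'x) set set \<Rightarrow> ((nat \<Rightarrow> 'x) set \<Rightarrow> (nat \<Rightarrow> 'x) set \<Rightarrow> real) set" where
  "Delta_BD \<Sigma> = {P. cond_opinion \<Sigma> P \<and> blackwell_dubins \<Sigma> P}"

end

theory Submission
  imports Defs
begin

lemma cyl_0[simp]: "cyl \<omega> 0 = UNIV" by (simp add: cyl_def)

lemma cyl_mono: "t \<le> s \<Longrightarrow> cyl \<omega> s \<subseteq> cyl \<omega> t" by (auto simp: cyl_def)

lemma cyl_same: "\<omega>' \<in> cyl \<omega> t \<Longrightarrow> cyl \<omega>' t = cyl \<omega> t" by (auto simp: cyl_def)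

lemma cyl_self: "\<omega> \<in> cyl \<omega> t" by (simp add: cyl_def)

lemma cyl_open: "openin path_topology (cyl \<omega> t)"
proof (induction t)
  case 0
  have "topspace path_topology = UNIV" by (simp add: path_topology_def)
  then show ?case by (metis cyl_0 openin_topspace)
next
  case (Suc t)
  have "openin path_topology {x \<in> topspace path_topology. x t \<in> {\<omega> t}}"
    unfolding path_topology_def
    by (rule openin_continuous_map_preimage[OF continuous_map_product_projection]) auto
  moreover have "{x \<in> topspace path_topology. x t \<in> {\<omega> t}} = {x. x t = \<omega> t}"
    by (simp add: path_topology_def)
  moreover have "cyl \<omega> (Suc t) = cyl \<omega> t \<inter> {x. x t = \<omega> t}"
    by (auto simp: cyl_def less_Suc_eq)
  ultimately show ?case using Suc by (metis openin_Int)
qed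

lemma cyl_union_open:
  assumes "\<And>a b. a \<in> cyl b t \<Longrightarrow> b \<in> S \<Longrightarrow> a \<in> S"
  shows "openin path_topology S"
proof -
  have "S = \<Union> ((\<lambda>b. cyl b t) ` S)" using assms cyl_self by blast
  then show ?thesis by (metis (no_types, lifting) cyl_open imageE openin_Union)
qed

lemma sa_Diff: "sigma_algebra UNIV \<Sigma> \<Longrightarrow> A \<in> \<Sigma> \<Longrightarrow> B \<in> \<Sigma> \<Longrightarrow> A - B \<in> \<Sigma>"
proof - assume "sigma_algebra UNIV \<Sigma>" "A \<in> \<Sigma>" "B \<in> \<Sigma>"
  then interpret sigma_algebra UNIV \<Sigma> by simp
  show ?thesis using \<open>A \<in> \<Sigma>\<close> \<open>B \<in> \<Sigma>\<close> by auto qed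
lemma sa_Int: "sigma_algebra UNIV \<Sigma> \<Longrightarrow> A \<in> \<Sigma> \<Longrightarrow> B \<in> \<Sigma> \<Longrightarrow> A \<inter> B \<in> \<Sigma>"
proof - assume "sigma_algebra UNIV \<Sigma>" "A \<in> \<Sigma>" "B \<in> \<Sigma>"
  then interpret sigma_algebra UNIV \<Sigma> by simp
  show ?thesis using \<open>A \<in> \<Sigma>\<close> \<open>B \<in> \<Sigma>\<close> by auto qed
lemma sa_Un: "sigma_algebra UNIV \<Sigma> \<Longrightarrow> A \<in> \<Sigma> \<Longrightarrow> B \<in> \<Sigma> \<Longrightarrow> A \<union> B \<in> \<Sigma>"
proof - assume "sigma_algebra UNIV \<Sigma>" "A \<in> \<Sigma>" "B \<in> \<Sigma>"
  then interpret sigma_algebra UNIV \<Sigma> by simp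
  show ?thesis using \<open>A \<in> \<Sigma>\<close> \<open>B \<in> \<Sigma>\<close> by auto qed
lemma sa_UNIV: "sigma_algebra UNIV \<Sigma> \<Longrightarrow> UNIV \<in> \<Sigma>"
proof - assume "sigma_algebra UNIV \<Sigma>"
  then interpret sigma_algebra UNIV \<Sigma> by simp
  show ?thesis by auto qed
lemma sa_empty: "sigma_algebra UNIV \<Sigma> \<Longrightarrow> {} \<in> \<Sigma>"
proof - assume "sigma_algebra UNIV \<Sigma>"
  then interpret sigma_algebra UNIV \<Sigma> by simp
  show ?thesis by auto qed

lemma fa_empty: "fa_prob \<Sigma> P \<Longrightarrow> sigma_algebra UNIV \<Sigma> \<Longrightarrow> P {} = 0"
  unfolding fa_prob_def using sa_UNIV[of \<Sigma>] sa_empty[of \<Sigma>]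
  by (metis add_cancel_right_right inf_bot_right sup_bot.right_neutral)

lemma fa_diff:
  assumes "fa_prob \<Sigma> P" "sigma_algebra UNIV \<Sigma>" "A \<in> \<Sigma>" "B \<in> \<Sigma>" "A \<subseteq> B"
  shows "P (B - A) = P B - P A"
proof -
  have "B - A \<in> \<Sigma>" using assms by (meson sa_Diff)
  moreover have "B = A \<union> (B - A)" using assms by blast
  ultimately have "P B = P A + P (B - A)" using assms unfolding fa_prob_def
    by (metis Diff_disjoint)
  then show ?thesis by simp
qed

lemma fa_mono:
  assumes "fa_prob \<Sigma> P" "sigma_algebra UNIV \<Sigma>" "A \<in> \<Sigma>" "B \<in> \<Sigma>" "A \<subseteq> B"
  shows "P A \<le> P B"
proof -
  have "B - A \<in> \<Sigma>" using assms by (meson sa_Diff)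
  then have "0 \<le> P (B - A)" using assms(1) by (simp add: fa_prob_def)
  then show ?thesis using fa_diff[OF assms] by simp
qed

lemma fa_full:
  assumes "fa_prob \<Sigma> Q" "sigma_algebra UNIV \<Sigma>" "C \<in> \<Sigma>" "G \<in> \<Sigma>" "Q C = 1"
  shows "Q (G \<inter> C) = Q G"
proof -
  have U: "UNIV \<in> \<Sigma>" using assms(2) by (rule sa_UNIV)
  have GC: "G \<inter> C \<in> \<Sigma>" using assms by (meson sa_Int)
  have "Q (G - G \<inter> C) \<le> Q (UNIV - C)"
    using assms U GC by (intro fa_mono[OF assms(1,2)]) (auto intro: sa_Diff)
  also have "\<dots> = 0" using fa_diff[OF assms(1,2) assms(3) U] assms(1,5) by (simp add: fa_prob_def)
  finally have "Q (G - G \<inter> C) \<le> 0" .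
  moreover have "Q (G - G \<inter> C) = Q G - Q (G \<inter> C)" using fa_diff[OF assms(1,2) GC assms(4)] by simp
  moreover have "Q (G \<inter> C) \<le> Q G" using fa_mono[OF assms(1,2) GC assms(4)] by simp
  ultimately show ?thesis by simp
qed


lemma cp_fa: "cond_prob \<Sigma> P \<Longrightarrow> fa_prob \<Sigma> (\<lambda>E. P E (cyl \<omega> t))"
  by (simp add: cond_prob_def)

lemma cp_fa0: "cond_prob \<Sigma> P \<Longrightarrow> fa_prob \<Sigma> (\<lambda>E. P E UNIV)"
  using cp_fa[of \<Sigma> P undefined 0] by simp

lemma cp_mult: "cond_prob \<Sigma> P \<Longrightarrow> E \<in> \<Sigma> \<Longrightarrow>
   P (E \<inter> cyl \<omega> (t + n)) (cyl \<omega> t) = P E (cyl \<omega> (t + n)) * P (cyl \<omega> (t + n)) (cyl \<omega> t)"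
  unfolding cond_prob_def by blast

lemma merge_point:
  assumes adm: "admissible_sigma \<Sigma>" and cpP: "cond_prob \<Sigma> P" and cpQ: "cond_prob \<Sigma> Qt"
    and mg: "merges \<Sigma> P Qt" and one: "\<And>t. Qt (cyl \<omega> t) UNIV = 1" and eps: "\<epsilon> > 0"
  shows "eventually (\<lambda>t. \<forall>E\<in>\<Sigma>. \<bar>P E (cyl \<omega> t) - Qt E UNIV\<bar> \<le> \<epsilon>) sequentially"
proof -
  have sa: "sigma_algebra UNIV \<Sigma>" and opn: "\<And>U. openin path_topology U \<Longrightarrow> U \<in> \<Sigma>"
    using adm by (auto simp: admissible_sigma_def)
  define S where "S t = {\<omega>'. (SUP E\<in>\<Sigma>. \<bar>P E (cyl \<omega>' t) - Qt E (cyl \<omega>' t)\<bar>) > \<epsilon>}" for t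
  have conv: "(\<lambda>t. Qt (S t) UNIV) \<longlonglongrightarrow> 0"
    unfolding S_def by (rule mg[unfolded merges_def, rule_format, OF eps])
  have closed: "a \<in> S t" if "a \<in> cyl b t" "b \<in> S t" for a b t
    using that(2) unfolding S_def mem_Collect_eq by (simp only: cyl_same[OF that(1)])
  have SS: "S t \<in> \<Sigma>" for t by (rule opn, rule cyl_union_open, rule closed)
  have faQ: "fa_prob \<Sigma> (\<lambda>E. Qt E UNIV)" using cp_fa0[OF cpQ] .
  have cylS: "cyl \<omega> t \<in> \<Sigma>" for t using opn cyl_open by blast
  have ev: "eventually (\<lambda>t. Qt (S t) UNIV < 1) sequentially"
    using order_tendstoD(2)[OF conv] by simp
  show ?thesis using ev
  proof (rule eventually_mono)
    fix t assume lt: "Qt (S t) UNIV < 1"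
    have nin: "\<omega> \<notin> S t"
    proof
      assume "\<omega> \<in> S t"
      then have "cyl \<omega> t \<subseteq> S t" using closed by blast
      then have "Qt (cyl \<omega> t) UNIV \<le> Qt (S t) UNIV"
        using fa_mono[OF faQ sa cylS SS] by blast
      then show False using lt one by simp
    qed
    show "\<forall>E\<in>\<Sigma>. \<bar>P E (cyl \<omega> t) - Qt E UNIV\<bar> \<le> \<epsilon>"
    proof
      fix E assume E: "E \<in> \<Sigma>"
      have bP: "\<And>E. E \<in> \<Sigma> \<Longrightarrow> 0 \<le> P E (cyl \<omega> t) \<and> P E (cyl \<omega> t) \<le> 1"
        using cp_fa[OF cpP, of \<omega> t] by (simp add: fa_prob_def)
      have bQ: "\<And>E. E \<in> \<Sigma> \<Longrightarrow> 0 \<le> Qt E (cyl \<omega> t) \<and> Qt E (cyl \<omega> t) \<le> 1"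
        using cp_fa[OF cpQ, of \<omega> t] by (simp add: fa_prob_def)
      have bdd: "bdd_above ((\<lambda>E. \<bar>P E (cyl \<omega> t) - Qt E (cyl \<omega> t)\<bar>) ` \<Sigma>)"
      proof (rule bdd_aboveI2)
        fix E assume "E \<in> \<Sigma>"
        from bP[OF this] bQ[OF this] show "\<bar>P E (cyl \<omega> t) - Qt E (cyl \<omega> t)\<bar> \<le> 1" by linarith
      qed
      have "\<bar>P E (cyl \<omega> t) - Qt E (cyl \<omega> t)\<bar> \<le> (SUP E\<in>\<Sigma>. \<bar>P E (cyl \<omega> t) - Qt E (cyl \<omega> t)\<bar>)"
        by (rule cSUP_upper[OF E bdd])
      also have "\<dots> \<le> \<epsilon>" using nin by (simp add: S_def)
      finally have 1: "\<bar>P E (cyl \<omega> t) - Qt E (cyl \<omega> t)\<bar> \<le> \<epsilon>" .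
      have "Qt (E \<inter> cyl \<omega> (0 + t)) (cyl \<omega> 0) = Qt E (cyl \<omega> (0 + t)) * Qt (cyl \<omega> (0 + t)) (cyl \<omega> 0)"
        by (rule cp_mult[OF cpQ E])
      then have "Qt (E \<inter> cyl \<omega> t) UNIV = Qt E (cyl \<omega> t)" using one by simp
      moreover have "Qt (E \<inter> cyl \<omega> t) UNIV = Qt E UNIV"
        by (rule fa_full[OF faQ sa cylS E one])
      ultimately show "\<bar>P E (cyl \<omega> t) - Qt E UNIV\<bar> \<le> \<epsilon>" using 1 by simp
    qed
  qed
qed

lemma abs_cont_bound:
  assumes "\<And>E. E \<in> \<Sigma> \<Longrightarrow> 0 \<le> Q E \<and> Q E \<le> c * R E"
  shows "abs_cont \<Sigma> Q R"
  unfolding abs_cont_def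
proof (intro allI impI)
  fix En :: "nat \<Rightarrow> _" assume En: "\<forall>n. En n \<in> \<Sigma>" and R: "(\<lambda>n. R (En n)) \<longlonglongrightarrow> 0"
  have "(\<lambda>n. c * R (En n)) \<longlonglongrightarrow> c * 0" by (intro tendsto_mult tendsto_const R)
  then have h: "(\<lambda>n. c * R (En n)) \<longlonglongrightarrow> 0" by simp
  have lo: "eventually (\<lambda>n. 0 \<le> Q (En n)) sequentially" using assms En by simp
  have up: "eventually (\<lambda>n. Q (En n) \<le> c * R (En n)) sequentially" using assms En by simp
  show "(\<lambda>n. Q (En n)) \<longlonglongrightarrow> 0"
    by (rule real_tendsto_sandwich[OF lo up tendsto_const h])
qed


theorem mainTheorem13:
  fixes \<Sigma> :: "(nat \<Rightarrow> 'x::countable) set set"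
    and P :: "(nat \<Rightarrow> 'x) set \<Rightarrow> (nat \<Rightarrow> 'x) set \<Rightarrow> real"
    and \<omega> :: "nat \<Rightarrow> 'x"
  assumes "admissible_sigma \<Sigma>"
    and "P \<in> Delta_BD \<Sigma>"
  shows "(\<lambda>t. P (cyl \<omega> t) UNIV) \<longlonglongrightarrow> 0"
proof -
  have adm: "admissible_sigma \<Sigma>" by fact
  have sa: "sigma_algebra UNIV \<Sigma>" and opn: "\<And>U. openin path_topology U \<Longrightarrow> U \<in> \<Sigma>"
    using assms(1) by (auto simp: admissible_sigma_def)
  have cp: "cond_prob \<Sigma> P" and sn: "strongly_nonatomic \<Sigma> (\<lambda>E. P E UNIV)"
    and bd: "blackwell_dubins \<Sigma> P"
    using assms(2) by (auto simp: Delta_BD_def cond_opinion_def)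
  define Pu where "Pu E = P E UNIV" for E
  have faP: "fa_prob \<Sigma> Pu" unfolding Pu_def by (rule cp_fa0[OF cp])
  have cylS: "cyl \<omega> t \<in> \<Sigma>" for t using opn cyl_open by blast
  have UN: "UNIV \<in> \<Sigma>" by (rule sa_UNIV[OF sa])
  have Pge: "E \<in> \<Sigma> \<Longrightarrow> 0 \<le> Pu E" for E using faP by (simp add: fa_prob_def)
  have Ple: "E \<in> \<Sigma> \<Longrightarrow> Pu E \<le> 1" for E using faP by (simp add: fa_prob_def)
  define a where "a t = Pu (cyl \<omega> t)" for t
  have amono: "t \<le> s \<Longrightarrow> a s \<le> a t" for s t
    unfolding a_def by (rule fa_mono[OF faP sa cylS cylS cyl_mono])
  have adec: "decseq a" using amono by (simp add: decseq_def)
  have a0: "\<forall>i. 0 \<le> a i" using Pge cylS by (simp add: a_def)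
  obtain L where aL: "a \<longlonglongrightarrow> L" and Lle: "\<forall>i. L \<le> a i"
    by (rule decseq_convergent[OF adec a0])
  have L0: "0 \<le> L" by (rule LIMSEQ_le_const[OF aL]) (use a0 in auto)
  show ?thesis
  proof (rule ccontr)
    assume nz: "\<not> (\<lambda>t. P (cyl \<omega> t) UNIV) \<longlonglongrightarrow> 0"
    have "L \<noteq> 0"
    proof
      assume "L = 0"
      then have "(\<lambda>t. P (cyl \<omega> t) UNIV) \<longlonglongrightarrow> 0" using aL unfolding a_def Pu_def by simp
      then show False using nz by simp
    qed
    with L0 have Lpos: "L > 0" by simp
    define \<nu> where "\<nu> E = lim (\<lambda>s. Pu (E \<inter> cyl \<omega> s))" for E
    have nu_lim: "(\<lambda>s. Pu (E \<inter> cyl \<omega> s)) \<longlonglongrightarrow> \<nu> E" if E: "E \<in> \<Sigma>" for E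
    proof -
      have "decseq (\<lambda>s. Pu (E \<inter> cyl \<omega> s))"
        unfolding decseq_def
        using fa_mono[OF faP sa sa_Int[OF sa E cylS] sa_Int[OF sa E cylS]] cyl_mono by blast
      then obtain l where "(\<lambda>s. Pu (E \<inter> cyl \<omega> s)) \<longlonglongrightarrow> l"
        using decseq_convergent[of _ 0] Pge sa_Int[OF sa E cylS] by metis
      then show ?thesis unfolding \<nu>_def by (simp add: limI)
    qed
    have nu_ge: "0 \<le> \<nu> E" if E: "E \<in> \<Sigma>" for E
      using LIMSEQ_le_const[OF nu_lim[OF E], of 0] Pge sa_Int[OF sa E cylS] by blast
    have nu_leP: "\<nu> E \<le> Pu E" if E: "E \<in> \<Sigma>" for E
      using LIMSEQ_le_const2[OF nu_lim[OF E], of "Pu E"]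
        fa_mono[OF faP sa sa_Int[OF sa E cylS] E] by blast
    have nu_leL: "\<nu> E \<le> L" if E: "E \<in> \<Sigma>" for E
      using LIMSEQ_le[OF nu_lim[OF E] aL]
        fa_mono[OF faP sa sa_Int[OF sa E cylS] cylS] unfolding a_def by blast
    have nu_U: "\<nu> UNIV = L"
    proof -
      have "a \<longlonglongrightarrow> \<nu> UNIV" using nu_lim[OF UN] unfolding a_def by simp
      then show ?thesis using LIMSEQ_unique[OF _ aL] by simp
    qed
    have nu_add: "\<nu> (A \<union> B) = \<nu> A + \<nu> B" if A: "A \<in> \<Sigma>" and B: "B \<in> \<Sigma>" and d: "A \<inter> B = {}" for A B
    proof -
      have "Pu ((A \<union> B) \<inter> cyl \<omega> s) = Pu (A \<inter> cyl \<omega> s) + Pu (B \<inter> cyl \<omega> s)" for s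
      proof -
        have "(A \<union> B) \<inter> cyl \<omega> s = (A \<inter> cyl \<omega> s) \<union> (B \<inter> cyl \<omega> s)" by blast
        moreover have "(A \<inter> cyl \<omega> s) \<inter> (B \<inter> cyl \<omega> s) = {}" using d by blast
        ultimately show ?thesis using faP sa_Int[OF sa A cylS] sa_Int[OF sa B cylS]
          unfolding fa_prob_def by metis
      qed
      then have "(\<lambda>s. Pu ((A \<union> B) \<inter> cyl \<omega> s)) \<longlonglongrightarrow> \<nu> A + \<nu> B"
        using tendsto_add[OF nu_lim[OF A] nu_lim[OF B]] by simp
      then show ?thesis by (rule LIMSEQ_unique[OF nu_lim[OF sa_Un[OF sa A B]]])
    qed
    have nu_cyl: "\<nu> (cyl \<omega> t) = L" for t
    proof -
      have "eventually (\<lambda>s. a s = Pu (cyl \<omega> t \<inter> cyl \<omega> s)) sequentially"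
        unfolding eventually_sequentially a_def
        by (rule exI[of _ t]) (metis cyl_mono Int_absorb1)
      then have "(\<lambda>s. Pu (cyl \<omega> t \<inter> cyl \<omega> s)) \<longlonglongrightarrow> L" by (rule Lim_transform_eventually[OF aL])
      then show ?thesis by (rule LIMSEQ_unique[OF nu_lim[OF cylS]])
    qed
    define Q where "Q E = \<nu> E / L" for E
    have faQ: "fa_prob \<Sigma> Q"
      unfolding fa_prob_def
    proof (intro conjI ballI impI)
      fix E assume "E \<in> \<Sigma>" then show "0 \<le> Q E" "Q E \<le> 1"
        using nu_ge nu_leL Lpos by (auto simp: Q_def)
    next
      show "Q UNIV = 1" using nu_U Lpos by (simp add: Q_def)
    next
      fix A B assume "A \<in> \<Sigma>" "B \<in> \<Sigma>" "A \<inter> B = {}"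
      then show "Q (A \<union> B) = Q A + Q B" using nu_add by (simp add: Q_def add_divide_distrib)
    qed
    have absQ: "abs_cont \<Sigma> Q Pu"
      by (rule abs_cont_bound[where c="1/L"])
        (use nu_ge nu_leP Lpos in \<open>auto simp: Q_def divide_right_mono\<close>)
    have Qcyl: "Q (cyl \<omega> t) = 1" for t using nu_cyl Lpos by (simp add: Q_def)
    obtain t0 where t0: "a t0 < L + L/4"
    proof -
      have "eventually (\<lambda>t. a t < L + L/4) sequentially"
        by (rule order_tendstoD(2)[OF aL]) (use Lpos in simp)
      then obtain N where "\<forall>n\<ge>N. a n < L + L/4" unfolding eventually_sequentially by blast
      then show ?thesis using that by blast
    qed
    obtain G where G: "G \<in> \<Sigma>" "G \<subseteq> cyl \<omega> t0" "Pu G = 1/2 * a t0"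
      using sn[unfolded strongly_nonatomic_def, rule_format, OF cylS[of t0], of "1/2"]
      unfolding Pu_def a_def by auto
    have low: "3*L/8 \<le> Pu (G \<inter> cyl \<omega> s)" if s: "t0 \<le> s" for s
    proof -
      have GI: "G \<inter> cyl \<omega> s \<in> \<Sigma>" by (rule sa_Int[OF sa G(1) cylS])
      have D: "cyl \<omega> t0 - cyl \<omega> s \<in> \<Sigma>" by (rule sa_Diff[OF sa cylS cylS])
      have "Pu (G - G \<inter> cyl \<omega> s) = Pu G - Pu (G \<inter> cyl \<omega> s)"
        by (rule fa_diff[OF faP sa GI G(1)]) auto
      moreover have "Pu (G - G \<inter> cyl \<omega> s) \<le> Pu (cyl \<omega> t0 - cyl \<omega> s)"
        by (rule fa_mono[OF faP sa sa_Diff[OF sa G(1) GI] D]) (use G(2) in auto)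
      moreover have "Pu (cyl \<omega> t0 - cyl \<omega> s) = a t0 - a s"
        unfolding a_def by (rule fa_diff[OF faP sa cylS cylS cyl_mono[OF s]])
      moreover have "L \<le> a s" using Lle by blast
      ultimately show ?thesis using G(3) t0 by linarith
    qed
    have nuG_low: "3*L/8 \<le> \<nu> G"
      using LIMSEQ_le_const[OF nu_lim[OF G(1)], of "3*L/8"] low by blast
    have nuG_up: "\<nu> G \<le> 5*L/8" using nu_leP[OF G(1)] G(3) t0 by simp
    define q where "q = Q G"
    have qpos: "q > 0" and qle: "q \<le> 5/8"
      using nuG_low nuG_up Lpos unfolding q_def Q_def by (auto simp: field_simps)
    define Q2 where "Q2 E = Q (E \<inter> G) / q" for E
    have QI: "E \<in> \<Sigma> \<Longrightarrow> 0 \<le> Q (E \<inter> G) \<and> Q (E \<inter> G) \<le> q" for E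
      using faQ fa_mono[OF faQ sa sa_Int[OF sa _ G(1)] G(1)] sa_Int[OF sa _ G(1)]
      unfolding q_def fa_prob_def by blast
    have faQ2: "fa_prob \<Sigma> Q2"
      unfolding fa_prob_def
    proof (intro conjI ballI impI)
      fix E assume "E \<in> \<Sigma>" then show "0 \<le> Q2 E" "Q2 E \<le> 1"
        using QI qpos by (auto simp: Q2_def)
    next
      show "Q2 UNIV = 1" using qpos by (simp add: Q2_def q_def)
    next
      fix A B assume A: "A \<in> \<Sigma>" and B: "B \<in> \<Sigma>" and d: "A \<inter> B = {}"
      have "(A \<union> B) \<inter> G = (A \<inter> G) \<union> (B \<inter> G)" by blast
      moreover have "(A \<inter> G) \<inter> (B \<inter> G) = {}" using d by blast
      ultimately have "Q ((A \<union> B) \<inter> G) = Q (A \<inter> G) + Q (B \<inter> G)"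
        using faQ sa_Int[OF sa A G(1)] sa_Int[OF sa B G(1)] unfolding fa_prob_def by metis
      then show "Q2 (A \<union> B) = Q2 A + Q2 B" by (simp add: Q2_def add_divide_distrib)
    qed
    have absQ2: "abs_cont \<Sigma> Q2 Pu"
    proof (rule abs_cont_bound[where c="1/(L*q)"])
      fix E assume E: "E \<in> \<Sigma>"
      have "Q (E \<inter> G) \<le> Q E" by (rule fa_mono[OF faQ sa sa_Int[OF sa E G(1)] E]) auto
      also have "\<dots> \<le> Pu E / L" using nu_leP[OF E] Lpos by (simp add: Q_def divide_right_mono)
      finally have "Q (E \<inter> G) / q \<le> Pu E / L / q" using qpos by (intro divide_right_mono) auto
      then show "0 \<le> Q2 E \<and> Q2 E \<le> 1 / (L * q) * Pu E"
        using QI[OF E] qpos by (simp add: Q2_def)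
    qed
    have Q2cyl: "Q2 (cyl \<omega> t) = 1" for t
      using fa_full[OF faQ sa cylS G(1) Qcyl[of t]] qpos unfolding Q2_def q_def by (simp add: Int_commute)
    have Q2G: "Q2 G = 1" using qpos by (simp add: Q2_def q_def)
    obtain Qt1 where Qt1: "cond_prob \<Sigma> Qt1" "\<forall>E\<in>\<Sigma>. Qt1 E UNIV = Q E" "merges \<Sigma> P Qt1"
    proof -
      have "abs_cont \<Sigma> Q (\<lambda>E. P E UNIV)" using absQ unfolding Pu_def[abs_def] .
      from bd[unfolded blackwell_dubins_def, rule_format, OF conjI[OF faQ this]] that
      show ?thesis by blast
    qed
    obtain Qt2 where Qt2: "cond_prob \<Sigma> Qt2" "\<forall>E\<in>\<Sigma>. Qt2 E UNIV = Q2 E" "merges \<Sigma> P Qt2"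
    proof -
      have "abs_cont \<Sigma> Q2 (\<lambda>E. P E UNIV)" using absQ2 unfolding Pu_def[abs_def] .
      from bd[unfolded blackwell_dubins_def, rule_format, OF conjI[OF faQ2 this]] that
      show ?thesis by blast
    qed
    have e1: "eventually (\<lambda>t. \<forall>E\<in>\<Sigma>. \<bar>P E (cyl \<omega> t) - Qt1 E UNIV\<bar> \<le> 1/8) sequentially"
    proof -
      have one: "\<And>t. Qt1 (cyl \<omega> t) UNIV = 1" using Qt1(2) cylS Qcyl by simp
      show ?thesis by (rule merge_point[OF adm cp Qt1(1) Qt1(3) one]) simp
    qed
    have e2: "eventually (\<lambda>t. \<forall>E\<in>\<Sigma>. \<bar>P E (cyl \<omega> t) - Qt2 E UNIV\<bar> \<le> 1/8) sequentially"
    proof -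
      have one: "\<And>t. Qt2 (cyl \<omega> t) UNIV = 1" using Qt2(2) cylS Q2cyl by simp
      show ?thesis by (rule merge_point[OF adm cp Qt2(1) Qt2(3) one]) simp
    qed
    obtain t where "\<forall>E\<in>\<Sigma>. \<bar>P E (cyl \<omega> t) - Qt1 E UNIV\<bar> \<le> 1/8"
      "\<forall>E\<in>\<Sigma>. \<bar>P E (cyl \<omega> t) - Qt2 E UNIV\<bar> \<le> 1/8"
    proof -
      from eventually_conj[OF e1 e2] obtain N where
        "\<forall>n\<ge>N. (\<forall>E\<in>\<Sigma>. \<bar>P E (cyl \<omega> n) - Qt1 E UNIV\<bar> \<le> 1/8) \<and> (\<forall>E\<in>\<Sigma>. \<bar>P E (cyl \<omega> n) - Qt2 E UNIV\<bar> \<le> 1/8)"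
        unfolding eventually_sequentially by blast
      then show ?thesis using that by blast
    qed
    then have "\<bar>P G (cyl \<omega> t) - Q G\<bar> \<le> 1/8" "\<bar>P G (cyl \<omega> t) - Q2 G\<bar> \<le> 1/8"
      using G(1) Qt1(2) Qt2(2) by simp_all
    then show False using Q2G qle unfolding q_def by linarith
  qed
qed

end
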